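(* Let $k\ge1$ and $a_1,\dots,a_k\in\mathbb{F}_q$, and set $(b_1,\dots,b_k):=F(a_1,\dots,a_k)$. Then, as permutations of $\mathbb{P}^1(\mathbb{F}_q)$, $$x^{q-2}\circ(x-a_k)\circ x^{q-2}\circ(x-a_{k-1})\circ\cdots\circ x^{q-2}\circ(x-a_1)=\nu(x)\circ(b_1,\infty)\circ(b_2,\infty)\circ\cdots\circ(b_k,\infty),$$ where $\nu(x):=x^{-1}\circ(x-a_k)\circ x^{-1}\circ(x-a_{k-1})\circ\cdots\circ x^{-1}\circ(x-a_1)$, which is a degree-one rational function in $\mathbb{F}_q(x)$.
   Context: Let $q>2$ be a prime power, $\mathbb{F}_q$ the field with $q$ elements, $\mathbb{P}^1(\mathbb{F}_q)=\mathbb{F}_q\cup\{\infty\}$. Degree-one rational functions in $\mathbb{F}_q(x)$ act on $\mathbb{P}^1(\mathbb{F}_q)$ with the usual conventions (e.g. $x^{-1}$ swaps $0$ and $\infty$, polynomials fix $\infty$). $x^{q-2}$ acts on $\mathbb{P}^1(\mathbb{F}_q)$ by fixing $0$ and $\infty$ and sending $c\in\mathbb{F}_q^*$ to $c^{q-2}=c^{-1}$; for $c\in\mathbb{F}_q$, $c^{q-2}$ also denotes the field element ($0^{q-2}=0$). For $b\in\mathbb{F}_q$, $(b,\infty)$ is the transposition swapping $b$ and $\infty$. Composition is $(f\circ g)(x)=f(g(x))$. The map $F:\mathbb{F}_q^k\to\mathbb{F}_q^k$ sends $(a_1,\dots,a_k)$ to $(b_1,\dots,b_k)$ where $b_i:=c_{i,i}$,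 and for each $1\le i\le k$ the elements $c_{i,j}$ ($0\le j\le i$) are defined by $c_{i,0}:=0$ and $c_{i,j}:=c_{i,j-1}^{q-2}+a_{i-j+1}$. *)

theory Defs
  imports Main "HOL-Library.Cardinality"
begin

text \<open>The projective line P^1(F_q) is modelled as 'a option: Some c is c, None is infinity.
  The finite field F_q is a type 'a of class finite field, q = CARD('a).\<close>

definition pow_q2 :: "'a::{field,finite} option \<Rightarrow> 'a option" where
  "pow_q2 y = (case y of None \<Rightarrow> None | Some c \<Rightarrow> Some (c ^ (CARD('a) - 2)))"

definition shift :: "'a::field \<Rightarrow> 'a option \<Rightarrow> 'a option" where
  "shift a y = (case y of None \<Rightarrow> None | Some c \<Rightarrow> Some (c - a))"

definition recip :: "'a::field option \<Rightarrow> 'a option" where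
  "recip y = (case y of None \<Rightarrow> Some 0 | Some c \<Rightarrow> (if c = 0 then None else Some (inverse c)))"

definition mobius :: "'a::field \<Rightarrow> 'a \<Rightarrow> 'a \<Rightarrow> 'a \<Rightarrow> 'a option \<Rightarrow> 'a option" where
  "mobius al be ga de y = (case y of
      None \<Rightarrow> (if ga = 0 then None else Some (al / ga))
    | Some c \<Rightarrow> (if ga * c + de = 0 then None else Some ((al * c + be) / (ga * c + de))))"

definition transp_inf :: "'a \<Rightarrow> 'a option \<Rightarrow> 'a option" where
  "transp_inf b y = (if y = Some b then None else if y = None then Some b else y)"

text \<open>c_{i,j} with sequence a indexed from 1: c_{i,0} = 0, c_{i,j+1} = c_{i,j}^(q-2) + a_{i-j}.\<close>
fun cF :: "(nat \<Rightarrow> 'a::{field,finite}) \<Rightarrow> nat \<Rightarrow> nat \<Rightarrow> 'a" where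
  "cF a i 0 = 0"
| "cF a i (Suc j) = (cF a i j) ^ (CARD('a) - 2) + a (i - j)"

text \<open>b_i, the i-th component of F(a_1,...,a_k) (independent of k >= i).\<close>
definition bF :: "(nat \<Rightarrow> 'a::{field,finite}) \<Rightarrow> nat \<Rightarrow> 'a" where
  "bF a i = cF a i i"

fun lhsF :: "(nat \<Rightarrow> 'a::{field,finite}) \<Rightarrow> nat \<Rightarrow> 'a option \<Rightarrow> 'a option" where
  "lhsF a 0 = id"
| "lhsF a (Suc k) = pow_q2 \<circ> shift (a (Suc k)) \<circ> lhsF a k"

fun nuF :: "(nat \<Rightarrow> 'a::field) \<Rightarrow> nat \<Rightarrow> 'a option \<Rightarrow> 'a option" where
  "nuF a 0 = id"
| "nuF a (Suc k) = recip \<circ> shift (a (Suc k)) \<circ> nuF a k"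

fun transpsF :: "(nat \<Rightarrow> 'a::{field,finite}) \<Rightarrow> nat \<Rightarrow> 'a option \<Rightarrow> 'a option" where
  "transpsF a 0 = id"
| "transpsF a (Suc k) = transpsF a k \<circ> transp_inf (bF a (Suc k))"

end

theory Submission
  imports Defs
begin

lemma fermat_ff:
  fixes c :: "'a::{field,finite}"
  assumes c: "c \<noteq> 0"
  shows "c ^ (CARD('a) - 1) = 1"
proof -
  let ?S = "UNIV - {0::'a}"
  have inj: "inj_on (\<lambda>x. c * x) ?S" using c by (auto simp: inj_on_def)
  have img: "(\<lambda>x. c * x) ` ?S = ?S"
  proof
    show "(\<lambda>x. c * x) ` ?S \<subseteq> ?S" using c by auto
    show "?S \<subseteq> (\<lambda>x. c * x) ` ?S"
    proof
      fix y assume "y \<in> ?S"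
      then have "y = c * (inverse c * y)" "inverse c * y \<in> ?S" using c by auto
      then show "y \<in> (\<lambda>x. c * x) ` ?S" by blast
    qed
  qed
  have "prod id ?S = prod id ((\<lambda>x. c * x) ` ?S)" using img by simp
  also have "\<dots> = prod (\<lambda>x. c * x) ?S" using prod.reindex[OF inj, of id] by simp
  also have "\<dots> = c ^ card ?S * prod id ?S" by (simp add: prod.distrib)
  finally have eq: "prod id ?S = c ^ card ?S * prod id ?S" .
  have nz: "prod id ?S \<noteq> 0" by (simp add: prod_zero_iff)
  have "c ^ card ?S = 1" using eq nz by (metis mult_cancel_right2)
  moreover have "card ?S = CARD('a) - 1" by (simp add: card_Diff_singleton)
  ultimately show ?thesis by simp
qed

lemma pow_inv:
  fixes c :: "'a::{field,finite}"
  assumes q: "CARD('a) > 2" and c: "c \<noteq> 0"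
  shows "c ^ (CARD('a) - 2) = inverse c"
proof -
  have "CARD('a) - 1 = Suc (CARD('a) - 2)" using q by simp
  then have "c ^ (CARD('a) - 2) * c = 1" using fermat_ff[OF c] by (simp add: mult.commute)
  then show ?thesis using c by (simp add: field_simps)
qed

lemma pow_zero:
  assumes q: "CARD('a::{field,finite}) > 2"
  shows "(0::'a) ^ (CARD('a) - 2) = 0"
  using q by simp

lemma pow_invol:
  fixes c :: "'a::{field,finite}"
  assumes q: "CARD('a) > 2"
  shows "(c ^ (CARD('a) - 2)) ^ (CARD('a) - 2) = c"
proof (cases "c = 0")
  case True then show ?thesis using q by simp
next
  case False
  then show ?thesis using pow_inv[OF q] by simp
qed

lemma pow_q2_eq:
  assumes q: "CARD('a::{field,finite}) > 2"
  shows "(pow_q2 :: 'a option \<Rightarrow> _) = recip \<circ> transp_inf 0"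
proof
  fix y :: "'a option"
  show "pow_q2 y = (recip \<circ> transp_inf 0) y"
    using q pow_inv[OF q]
    by (cases y) (auto simp: pow_q2_def recip_def transp_inf_def)
qed

lemma inj_pow_q2:
  assumes q: "CARD('a::{field,finite}) > 2"
  shows "inj (pow_q2 :: 'a option \<Rightarrow> _)"
proof (rule injI)
  fix x y :: "'a option"
  assume "pow_q2 x = pow_q2 y"
  then show "x = y"
    using pow_invol[OF q]
    by (cases x; cases y) (auto simp: pow_q2_def, metis)
qed

lemma inj_shift: "inj (shift a)"
  by (rule injI) (auto simp: shift_def split: option.splits)

lemma inj_lhsF:
  assumes q: "CARD('a::{field,finite}) > 2"
  shows "inj (lhsF (a :: nat \<Rightarrow> 'a) k)"
proof (induction k)
  case 0 then show ?case by simp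
next
  case (Suc k)
  have "inj (pow_q2 \<circ> shift (a (Suc k)) \<circ> lhsF a k)"
    by (intro inj_compose inj_pow_q2[OF q] inj_shift Suc.IH)
  then show ?case by (simp add: comp_def)
qed

lemma lhsF_None: "lhsF a k None = None"
  by (induction k) (auto simp: pow_q2_def shift_def)

lemma lhsF_c:
  fixes a :: "nat \<Rightarrow> 'a::{field,finite}"
  assumes q: "CARD('a) > 2"
  shows "j \<le> k \<Longrightarrow> lhsF a j (Some (cF a (Suc k) (Suc k))) = Some (cF a (Suc k) (Suc k - j))"
proof (induction j)
  case 0 then show ?case by simp
next
  case (Suc j)
  then have IH: "lhsF a j (Some (cF a (Suc k) (Suc k))) = Some (cF a (Suc k) (Suc k - j))" by simp
  have e1: "Suc k - j = Suc (k - j)" using Suc.prems by simp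
  have e2: "Suc k - (k - j) = Suc j" using Suc.prems by simp
  have e3: "Suc k - Suc j = k - j" by simp
  show ?case using IH e1 e2 e3
    by (simp add: pow_q2_def shift_def pow_invol[OF q])
qed

lemma lhsF_b:
  fixes a :: "nat \<Rightarrow> 'a::{field,finite}"
  assumes q: "CARD('a) > 2"
  shows "lhsF a k (Some (bF a (Suc k))) = Some (a (Suc k))"
  using lhsF_c[OF q, of k k a] q by (simp add: bF_def)

lemma main_eq:
  fixes a :: "nat \<Rightarrow> 'a::{field,finite}"
  assumes q: "CARD('a) > 2"
  shows "lhsF a k = nuF a k \<circ> transpsF a k"
proof (induction k)
  case 0 then show ?case by simp
next
  case (Suc k)
  define h where "h = shift (a (Suc k)) \<circ> lhsF a k"
  define b where "b = bF a (Suc k)"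
  have injh: "inj h" unfolding h_def by (intro inj_compose inj_shift inj_lhsF[OF q])
  have hN: "h None = None" by (simp add: h_def lhsF_None shift_def)
  have hb: "h (Some b) = Some 0" by (simp add: h_def b_def lhsF_b[OF q] shift_def)
  have comm: "transp_inf 0 \<circ> h = h \<circ> transp_inf b"
  proof
    fix y
    show "(transp_inf 0 \<circ> h) y = (h \<circ> transp_inf b) y"
    proof (cases "y = Some b")
      case True then show ?thesis using hb hN by (simp add: transp_inf_def)
    next
      case False
      show ?thesis
      proof (cases "y = None")
        case True then show ?thesis using hb hN by (simp add: transp_inf_def)
      next
        case False2: False
        have "h y \<noteq> Some 0" using False hb injh by (metis injD)
        moreover have "h y \<noteq> None" using False2 hN injh by (metis injD)
        ultimately have "transp_inf 0 (h y) = h y" by (simp add: transp_inf_def)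
        moreover have "transp_inf b y = y" using False False2 by (simp add: transp_inf_def)
        ultimately show ?thesis by simp
      qed
    qed
  qed
  have "lhsF a (Suc k) = recip \<circ> (transp_inf 0 \<circ> h)"
    by (simp add: pow_q2_eq[OF q] h_def comp_assoc)
  also have "\<dots> = recip \<circ> h \<circ> transp_inf b" using comm by (simp add: comp_assoc)
  also have "\<dots> = nuF a (Suc k) \<circ> transpsF a (Suc k)"
    using Suc.IH by (simp add: h_def b_def comp_def)
  finally show ?case .
qed

lemma mob_step:
  fixes al be ga de x :: "'a::field"
  assumes d: "al * de - be * ga \<noteq> 0"
  shows "recip (shift x (mobius al be ga de y)) = mobius ga de (al - x*ga) (be - x*de) y"
proof (cases y)
  case None
  show ?thesis
  proof (cases "ga = 0")
    case True
    then have "al \<noteq> 0" using d by auto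
    then show ?thesis using None True by (simp add: mobius_def shift_def recip_def)
  next
    case False
    have "al / ga - x = (al - x*ga) / ga" using False by (simp add: field_simps)
    then show ?thesis using None False
      by (auto simp: mobius_def shift_def recip_def)
  qed
next
  case (Some c)
  show ?thesis
  proof (cases "ga * c + de = 0")
    case True
    have "al * c + be \<noteq> 0"
    proof
      assume h: "al * c + be = 0"
      have "de = - ga * c" "be = - al * c" using True h by (simp_all add: algebra_simps eq_neg_iff_add_eq_0)
      then have "al * de - be * ga = 0" by (simp add: algebra_simps)
      then show False using d by simp
    qed
    moreover have "(al - x * ga) * c + (be - x * de) = al * c + be - x * (ga * c + de)"
      by (simp add: algebra_simps)
    ultimately have "(al - x * ga) * c + (be - x * de) \<noteq> 0" using True by (metis mult_zero_right diff_zero)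
    then show ?thesis using Some True by (simp add: mobius_def shift_def recip_def)
  next
    case False
    have e: "(al * c + be) / (ga * c + de) - x = ((al - x * ga) * c + (be - x * de)) / (ga * c + de)"
      using False by (simp add: field_simps)
    show ?thesis using Some False
      by (simp add: mobius_def shift_def recip_def e)
  qed
qed

lemma nu_mob:
  fixes a :: "nat \<Rightarrow> 'a::field"
  shows "\<exists>al be ga de. al * de - be * ga \<noteq> 0 \<and> nuF a k = mobius al be ga de"
proof (induction k)
  case 0
  have "id = mobius (1::'a) 0 0 1"
    by (rule ext) (simp add: mobius_def split: option.splits)
  then show ?case by (intro exI[of _ 1] exI[of _ 0] exI[of _ 0] exI[of _ 1]) simp
next
  case (Suc k)
  then obtain al be ga de where d: "al * de - be * ga \<noteq> (0::'a)" and n: "nuF a k = mobius al be ga de"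
    by blast
  let ?x = "a (Suc k)"
  have "nuF a (Suc k) = mobius ga de (al - ?x*ga) (be - ?x*de)"
    by (rule ext) (simp add: n mob_step[OF d])
  moreover have "ga * (be - ?x*de) - de * (al - ?x*ga) \<noteq> 0"
  proof -
    have "ga * (be - ?x*de) - de * (al - ?x*ga) = - (al * de - be * ga)" by (simp add: algebra_simps)
    then show ?thesis using d by simp
  qed
  ultimately show ?case by blast
qed

theorem theorem3p2:
  fixes a :: "nat \<Rightarrow> 'a::{field,finite}" and k :: nat
  assumes "CARD('a) > 2" and "k \<ge> 1"
  shows "lhsF a k = nuF a k \<circ> transpsF a k
    \<and> (\<exists>al be ga de. al * de - be * ga \<noteq> 0 \<and> nuF a k = mobius al be ga de)"
  using main_eq[OF assms(1)] nu_mob by blast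

end
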